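(* Let $(X,\Sigma)$ be a measurable space, $p$ a transition function on it with associated operator $A$ on $ba(X,\Sigma)$, and let $K=\{\mu_1,\dots,\mu_m\}$ be a finitely additive cycle of measures of $A$. Then $K$ is countably additive (i.e. all $\mu_i$ are countably additive) if and only if its mean measure $\frac1m\sum_{k=1}^m\mu_k$ is countably additive.
   Context: $X$ is an arbitrary infinite set and $\Sigma$ a $\sigma$-algebra of subsets of $X$ containing all one-point sets. $ba(X,\Sigma)$ denotes the space of bounded finitely additive real-valued measures on $\Sigma$. A transition function is a map $p(x,E)$ with $0\le p(x,E)\le1$, $p(x,X)=1$, $p(\cdot,E)$ bounded $\Sigma$-measurable for every $E\in\Sigma$, and $p(x,\cdot)$ countably additive for every $x\in X$. The Markov operator is $A\mu(E)=\int_X p(x,E)\,\mu(dx)$. A cycle of measures of $A$ is a finite numbered set $\{\mu_1,\dots,\mu_m\}$ of pairwise different positive finitely additive measures with $A\mu_i=\mu_{i+1}$ ($1\le i\le m-1$), $A\mu_m=\mu_1$; its mean measure is $\frac1m\sum_k\mu_k$. *)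

theory Defs
  imports "HOL-Analysis.Analysis"
begin

definition standing_space :: "'a set \<Rightarrow> 'a set set \<Rightarrow> bool" where
  "standing_space X \<Sigma> \<longleftrightarrow> infinite X \<and> sigma_algebra X \<Sigma> \<and> (\<forall>x\<in>X. {x} \<in> \<Sigma>)"

text \<open>Set functions on Sigma are represented as functions on all sets, required to be 0 off Sigma.\<close>
definition fin_additive :: "'a set set \<Rightarrow> ('a set \<Rightarrow> real) \<Rightarrow> bool" where
  "fin_additive \<Sigma> \<mu> \<longleftrightarrow> (\<forall>E. E \<notin> \<Sigma> \<longrightarrow> \<mu> E = 0) \<and>
     (\<forall>A\<in>\<Sigma>. \<forall>B\<in>\<Sigma>. A \<inter> B = {} \<longrightarrow> \<mu> (A \<union> B) = \<mu> A + \<mu> B)"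

definition ba_measure :: "'a set \<Rightarrow> 'a set set \<Rightarrow> ('a set \<Rightarrow> real) \<Rightarrow> bool" where
  "ba_measure X \<Sigma> \<mu> \<longleftrightarrow> fin_additive \<Sigma> \<mu> \<and> (\<exists>C. \<forall>E\<in>\<Sigma>. \<bar>\<mu> E\<bar> \<le> C)"

definition positive_measure :: "'a set set \<Rightarrow> ('a set \<Rightarrow> real) \<Rightarrow> bool" where
  "positive_measure \<Sigma> \<mu> \<longleftrightarrow> (\<forall>E\<in>\<Sigma>. 0 \<le> \<mu> E)"

definition count_additive :: "'a set set \<Rightarrow> ('a set \<Rightarrow> real) \<Rightarrow> bool" where
  "count_additive \<Sigma> \<mu> \<longleftrightarrow> (\<forall>F::nat \<Rightarrow> 'a set. range F \<subseteq> \<Sigma> \<longrightarrow> disjoint_family F \<longrightarrow>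
      (\<lambda>i. \<mu> (F i)) sums \<mu> (\<Union>i. F i))"

definition sigma_measurable_fun :: "'a set \<Rightarrow> 'a set set \<Rightarrow> ('a \<Rightarrow> real) \<Rightarrow> bool" where
  "sigma_measurable_fun X \<Sigma> f \<longleftrightarrow> (\<forall>t::real. {x\<in>X. f x \<le> t} \<in> \<Sigma>)"

definition transition_function :: "'a set \<Rightarrow> 'a set set \<Rightarrow> ('a \<Rightarrow> 'a set \<Rightarrow> real) \<Rightarrow> bool" where
  "transition_function X \<Sigma> p \<longleftrightarrow>
     (\<forall>x\<in>X. \<forall>E\<in>\<Sigma>. 0 \<le> p x E \<and> p x E \<le> 1) \<and>
     (\<forall>x\<in>X. p x X = 1) \<and>
     (\<forall>E\<in>\<Sigma>. sigma_measurable_fun X \<Sigma> (\<lambda>x. p x E)) \<and>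
     (\<forall>x\<in>X. count_additive \<Sigma> (\<lambda>E. if E \<in> \<Sigma> then p x E else 0))"

definition sigma_partitions :: "'a set \<Rightarrow> 'a set set \<Rightarrow> 'a set set set" where
  "sigma_partitions X \<Sigma> = {P. finite P \<and> P \<subseteq> \<Sigma> \<and> {} \<notin> P \<and> disjoint P \<and> \<Union>P = X}"

text \<open>Integral of a bounded Sigma-measurable function against a positive bounded finitely
  additive measure (lower Darboux sums over finite measurable partitions; for bounded measurable
  functions this coincides with the standard integral).\<close>
definition fa_integral :: "'a set \<Rightarrow> 'a set set \<Rightarrow> ('a set \<Rightarrow> real) \<Rightarrow> ('a \<Rightarrow> real) \<Rightarrow> real" where
  "fa_integral X \<Sigma> \<mu> f = Sup {(\<Sum>E\<in>P. Inf (f ` E) * \<mu> E) | P. P \<in> sigma_partitions X \<Sigma>}"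

text \<open>The Markov operator A (applied to positive measures, which is all that cycles need).\<close>
definition markov_op :: "'a set \<Rightarrow> 'a set set \<Rightarrow> ('a \<Rightarrow> 'a set \<Rightarrow> real) \<Rightarrow> ('a set \<Rightarrow> real) \<Rightarrow> ('a set \<Rightarrow> real)" where
  "markov_op X \<Sigma> p \<mu> = (\<lambda>E. if E \<in> \<Sigma> then fa_integral X \<Sigma> \<mu> (\<lambda>x. p x E) else 0)"

text \<open>A cycle of measures, given as a list [mu_1,...,mu_m] (index i in the list is mu_(i+1)).\<close>
definition measure_cycle :: "'a set \<Rightarrow> 'a set set \<Rightarrow> ('a \<Rightarrow> 'a set \<Rightarrow> real) \<Rightarrow> ('a set \<Rightarrow> real) list \<Rightarrow> bool" where
  "measure_cycle X \<Sigma> p \<mu>s \<longleftrightarrow> \<mu>s \<noteq> [] \<and> distinct \<mu>s \<and>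
     (\<forall>i<length \<mu>s. ba_measure X \<Sigma> (\<mu>s ! i) \<and> positive_measure \<Sigma> (\<mu>s ! i)) \<and>
     (\<forall>i<length \<mu>s. markov_op X \<Sigma> p (\<mu>s ! i) = \<mu>s ! (Suc i mod length \<mu>s))"

definition mean_measure :: "('a set \<Rightarrow> real) list \<Rightarrow> ('a set \<Rightarrow> real)" where
  "mean_measure \<mu>s = (\<lambda>E. (\<Sum>k<length \<mu>s. (\<mu>s ! k) E) / real (length \<mu>s))"

end

theory Submission
  imports Defs
begin

lemma fin_add_finite_union:
  assumes sa: "sigma_algebra X \<Sigma>" and fa: "fin_additive \<Sigma> \<nu>"
    and F: "range F \<subseteq> \<Sigma>" and dj: "disjoint_family F"
  shows "\<nu> (\<Union>i<(n::nat). F i) = (\<Sum>i<n. \<nu> (F i))"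
proof (induction n)
  case 0
  have "{} \<in> \<Sigma>" using sa by (simp add: sigma_algebra_iff2 sets.empty_sets)
  hence "\<nu> ({} \<union> {}) = \<nu> {} + \<nu> {}" using fa unfolding fin_additive_def by blast
  then show ?case by simp
next
  case (Suc n)
  have A: "(\<Union>i<n. F i) \<in> \<Sigma>" using sa F
    by (intro ring_of_sets.finite_UN[where \<Omega>=X]) (auto simp: sigma_algebra.axioms(1) algebra.axioms(1))
  have B: "F n \<in> \<Sigma>" using F by auto
  have C: "(\<Union>i<n. F i) \<inter> F n = {}"
  proof -
    { fix x i assume a: "x \<in> F i" "i < n" "x \<in> F n"
      have "i \<noteq> n" using a(2) by simp
      hence "F i \<inter> F n = {}" using dj unfolding disjoint_family_on_def by blast
      hence False using a by blast }
    thus ?thesis by blast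
  qed
  have "(\<Union>i<Suc n. F i) = (\<Union>i<n. F i) \<union> F n" by (auto simp: lessThan_Suc)
  hence "\<nu> (\<Union>i<Suc n. F i) = \<nu> (\<Union>i<n. F i) + \<nu> (F n)"
    using fa A B C unfolding fin_additive_def by metis
  then show ?case using Suc by simp
qed

lemma dominated_count_add:
  assumes sa: "sigma_algebra X \<Sigma>" and fa: "fin_additive \<Sigma> \<nu>"
    and pos: "positive_measure \<Sigma> \<nu>" and ca: "count_additive \<Sigma> la"
    and dom: "\<forall>E\<in>\<Sigma>. \<nu> E \<le> c * la E"
  shows "count_additive \<Sigma> \<nu>"
  unfolding count_additive_def
proof (intro allI impI)
  fix F :: "nat \<Rightarrow> _" assume F: "range F \<subseteq> \<Sigma>" and dj: "disjoint_family F"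
  define T where "T n = (\<Union>i. F (i + n))" for n
  define U where "U = (\<Union>i. F i)"
  have Tin: "T n \<in> \<Sigma>" for n using sa F unfolding T_def
    by (intro sigma_algebra.countable_UN) auto
  have Sin: "(\<Union>i<n. F i) \<in> \<Sigma>" for n using sa F
    by (intro ring_of_sets.finite_UN[where \<Omega>=X]) (auto simp: sigma_algebra.axioms(1) algebra.axioms(1))
  have Ueq: "U = (\<Union>i<n. F i) \<union> T n" for n
  proof
    show "U \<subseteq> (\<Union>i<n. F i) \<union> T n"
    proof
      fix x assume "x \<in> U"
      then obtain i where xi: "x \<in> F i" unfolding U_def by auto
      show "x \<in> (\<Union>i<n. F i) \<union> T n"
      proof (cases "i < n")
        case True thus ?thesis using xi by auto
      next
        case False hence "i = (i - n) + n" by simp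
        hence "x \<in> F ((i - n) + n)" using xi by simp
        thus ?thesis unfolding T_def by blast
      qed
    qed
    show "(\<Union>i<n. F i) \<union> T n \<subseteq> U" unfolding U_def T_def by blast
  qed
  have disj: "(\<Union>i<n. F i) \<inter> T n = {}" for n
  proof -
    { fix x i j assume a: "x \<in> F i" "i < n" "x \<in> F (j + n)"
      have "i \<noteq> j + n" using a(2) by simp
      hence "F i \<inter> F (j + n) = {}" using dj unfolding disjoint_family_on_def by blast
      hence False using a by blast }
    thus ?thesis unfolding T_def by blast
  qed
  have nuU: "\<nu> U = (\<Sum>i<n. \<nu> (F i)) + \<nu> (T n)" for n
  proof -
    have "\<nu> ((\<Union>i<n. F i) \<union> T n) = \<nu> (\<Union>i<n. F i) + \<nu> (T n)"
      using fa Sin[of n] Tin[of n] disj[of n] unfolding fin_additive_def by blast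
    hence "\<nu> U = \<nu> (\<Union>i<n. F i) + \<nu> (T n)" using Ueq[of n] by simp
    then show ?thesis using fin_add_finite_union[OF sa fa F dj] by simp
  qed
  have lamU: "(\<lambda>i. la (F i)) sums la U" using ca F dj unfolding count_additive_def U_def by blast
  have lamT: "la (T n) = la U - (\<Sum>i<n. la (F i))" for n
  proof -
    have Fs: "range (\<lambda>i. F (i + n)) \<subseteq> \<Sigma>" using F by auto
    have ds: "disjoint_family (\<lambda>i. F (i + n))" using dj
      unfolding disjoint_family_on_def by auto
    have "(\<lambda>i. la (F (i + n))) sums la (T n)"
      using ca Fs ds unfolding count_additive_def T_def by blast
    hence "(\<lambda>i. la (F i)) sums (la (T n) + (\<Sum>i<n. la (F i)))"
      by (subst (asm) sums_iff_shift)
    with lamU have "la U = la (T n) + (\<Sum>i<n. la (F i))" using sums_unique2 by blast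
    thus ?thesis by simp
  qed
  have "(\<lambda>n. la U - (\<Sum>i<n. la (F i))) \<longlonglongrightarrow> la U - la U"
    using lamU unfolding sums_def by (intro tendsto_intros)
  hence "(\<lambda>n. c * la (T n)) \<longlonglongrightarrow> c * 0"
    unfolding lamT by (intro tendsto_intros) simp
  hence up: "(\<lambda>n. c * la (T n)) \<longlonglongrightarrow> 0" by simp
  have "(\<lambda>n. \<nu> (T n)) \<longlonglongrightarrow> 0"
  proof (rule tendsto_sandwich[OF _ _ tendsto_const up])
    show "\<forall>\<^sub>F n in sequentially. 0 \<le> \<nu> (T n)" using pos Tin unfolding positive_measure_def by auto
    show "\<forall>\<^sub>F n in sequentially. \<nu> (T n) \<le> c * la (T n)" using dom Tin by auto
  qed
  hence "(\<lambda>n. \<nu> U - \<nu> (T n)) \<longlonglongrightarrow> \<nu> U - 0" by (intro tendsto_intros)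
  moreover have "\<nu> U - \<nu> (T n) = (\<Sum>i<n. \<nu> (F i))" for n using nuU[of n] by simp
  ultimately show "(\<lambda>i. \<nu> (F i)) sums \<nu> (\<Union>i. F i)"
    unfolding sums_def U_def by simp
qed

theorem corollary4p1:
  fixes X :: "'a set" and \<Sigma> :: "'a set set" and p :: "'a \<Rightarrow> 'a set \<Rightarrow> real"
    and \<mu>s :: "('a set \<Rightarrow> real) list"
  assumes "standing_space X \<Sigma>"
    and "transition_function X \<Sigma> p"
    and "measure_cycle X \<Sigma> p \<mu>s"
  shows "(\<forall>i<length \<mu>s. count_additive \<Sigma> (\<mu>s ! i)) \<longleftrightarrow> count_additive \<Sigma> (mean_measure \<mu>s)"
proof
  assume H: "\<forall>i<length \<mu>s. count_additive \<Sigma> (\<mu>s ! i)"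
  show "count_additive \<Sigma> (mean_measure \<mu>s)"
    unfolding count_additive_def mean_measure_def
  proof (intro allI impI)
    fix F :: "nat \<Rightarrow> _" assume F: "range F \<subseteq> \<Sigma>" and dj: "disjoint_family F"
    have "(\<lambda>i. (\<Sum>k<length \<mu>s. (\<mu>s ! k) (F i))) sums (\<Sum>k<length \<mu>s. (\<mu>s ! k) (\<Union>i. F i))"
      using H F dj unfolding count_additive_def by (intro sums_sum) auto
    then show "(\<lambda>i. (\<Sum>k<length \<mu>s. (\<mu>s ! k) (F i)) / real (length \<mu>s)) sums
      ((\<Sum>k<length \<mu>s. (\<mu>s ! k) (\<Union>i. F i)) / real (length \<mu>s))"
      by (rule sums_divide)
  qed
next
  assume H: "count_additive \<Sigma> (mean_measure \<mu>s)"
  have sa: "sigma_algebra X \<Sigma>" using assms(1) unfolding standing_space_def by blast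
  have cyc: "\<forall>i<length \<mu>s. ba_measure X \<Sigma> (\<mu>s ! i) \<and> positive_measure \<Sigma> (\<mu>s ! i)"
    and ne: "\<mu>s \<noteq> []"
    using assms(3) unfolding measure_cycle_def by auto
  show "\<forall>i<length \<mu>s. count_additive \<Sigma> (\<mu>s ! i)"
  proof (intro allI impI)
    fix i assume i: "i < length \<mu>s"
    have m: "real (length \<mu>s) > 0" using ne by simp
    show "count_additive \<Sigma> (\<mu>s ! i)"
    proof (rule dominated_count_add[OF sa _ _ H, where c = "real (length \<mu>s)"])
      show "fin_additive \<Sigma> (\<mu>s ! i)" using cyc i unfolding ba_measure_def by blast
      show "positive_measure \<Sigma> (\<mu>s ! i)" using cyc i by blast
      show "\<forall>E\<in>\<Sigma>. (\<mu>s ! i) E \<le> real (length \<mu>s) * mean_measure \<mu>s E"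
      proof
        fix E assume E: "E \<in> \<Sigma>"
        have "(\<mu>s ! i) E \<le> (\<Sum>k<length \<mu>s. (\<mu>s ! k) E)"
          using cyc E i unfolding positive_measure_def
          by (intro member_le_sum) auto
        also have "\<dots> = real (length \<mu>s) * mean_measure \<mu>s E"
          unfolding mean_measure_def using m by simp
        finally show "(\<mu>s ! i) E \<le> real (length \<mu>s) * mean_measure \<mu>s E" .
      qed
    qed
  qed
qed

end
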